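(* Let $\mathbf k$ be a field which is finite or algebraically closed, $V$ a finite-dimensional $\mathbf k$-vector space with a nondegenerate quadratic form $Q$, and $X^*$ a $Q$-filtration of $V$. Then $\{1+N:N\in E^{\ge2}X^*\}\subset SO_Q$.
   Context: $\langle x,y\rangle=Q(x+y)-Q(x)-Q(y)$, $R$ its radical; $Q$ is nondegenerate if $Q|_R$ is injective. $W^\perp=\{x:\langle x,W\rangle=0\}$. $O_Q=\{T\in GL(V):Q(Tx)=Q(x)\ \forall x\}$; if $\mathbf k$ is algebraically closed $SO_Q$ is the identity component of $O_Q$, if $\mathbf k$ is finite $SO_Q=O_Q\cap SO_{\tilde Q}$ with $\tilde Q$ the extension of $Q$ to an algebraic closure. $\tilde{\mathcal M}_Q$ is the set of nilpotent $N\in\mathrm{End}(V)$ with $Q(Nx)=-\langle x,Nx\rangle$ for all $x$. A $Q$-filtration is a decreasing family $(X^{\ge a})_{a\in\mathbb Z}$ of subspaces, $0$ for $a\gg0$, $V$ for $a\ll0$, with $Q|_{X^{\ge a}}=0$ and $X^{\ge1-a}=(X^{\ge a})^\perp$ for $a\ge1$. $E^{\ge2}X^*=\{N\in\tilde{\mathcal M}_Q:NX^{\ge a}\subset X^{\ge a+2}\ \forall a\}$. *)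

theory Defs
  imports "HOL-Analysis.Analysis" "HOL-Computational_Algebra.Polynomial"
begin

text \<open>The vector space V is modelled as 'k^'n (coordinates w.r.t. a basis);
 endomorphisms of V as matrices 'k^'n^'n acting by *v.\<close>

definition polar :: "('k::field^'n \<Rightarrow> 'k) \<Rightarrow> 'k^'n \<Rightarrow> 'k^'n \<Rightarrow> 'k" where
  "polar Q x y = Q (x + y) - Q x - Q y"

definition quadratic_form :: "('k::field^'n \<Rightarrow> 'k) \<Rightarrow> bool" where
  "quadratic_form Q \<longleftrightarrow>
     (\<forall>c x. Q (c *s x) = c^2 * Q x) \<and>
     (\<forall>x y z. polar Q (x + y) z = polar Q x z + polar Q y z) \<and>
     (\<forall>c x y. polar Q (c *s x) y = c * polar Q x y)"

definition radical :: "('k::field^'n \<Rightarrow> 'k) \<Rightarrow> ('k^'n) set" where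
  "radical Q = {x. \<forall>y. polar Q x y = 0}"

definition nondegenerate :: "('k::field^'n \<Rightarrow> 'k) \<Rightarrow> bool" where
  "nondegenerate Q \<longleftrightarrow> inj_on Q (radical Q)"

definition perp :: "('k::field^'n \<Rightarrow> 'k) \<Rightarrow> ('k^'n) set \<Rightarrow> ('k^'n) set" where
  "perp Q W = {x. \<forall>w\<in>W. polar Q x w = 0}"

definition lin_subspace :: "('k::field^'n) set \<Rightarrow> bool" where
  "lin_subspace W \<longleftrightarrow> 0 \<in> W \<and> (\<forall>x\<in>W. \<forall>y\<in>W. x + y \<in> W) \<and> (\<forall>c. \<forall>x\<in>W. c *s x \<in> W)"

definition Q_filtration :: "('k::field^'n \<Rightarrow> 'k) \<Rightarrow> (int \<Rightarrow> ('k^'n) set) \<Rightarrow> bool" where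
  "Q_filtration Q X \<longleftrightarrow>
     (\<forall>a. lin_subspace (X a)) \<and>
     (\<forall>a b. a \<le> b \<longrightarrow> X b \<subseteq> X a) \<and>
     (\<exists>a0. \<forall>a\<ge>a0. X a = {0}) \<and>
     (\<exists>a1. \<forall>a\<le>a1. X a = UNIV) \<and>
     (\<forall>a\<ge>1. (\<forall>x\<in>X a. Q x = 0) \<and> X (1 - a) = perp Q (X a))"

primrec mpow :: "'k::semiring_1^'n^'n \<Rightarrow> nat \<Rightarrow> 'k^'n^'n" where
  "mpow A 0 = mat 1"
| "mpow A (Suc m) = A ** mpow A m"

definition nilpotent_mat :: "'k::semiring_1^'n^'n \<Rightarrow> bool" where
  "nilpotent_mat N \<longleftrightarrow> (\<exists>m. mpow N m = 0)"

definition tilde_M :: "('k::field^'n \<Rightarrow> 'k) \<Rightarrow> ('k^'n^'n) set" where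
  "tilde_M Q = {N. nilpotent_mat N \<and> (\<forall>x. Q (N *v x) = - polar Q x (N *v x))}"

definition E2 :: "('k::field^'n \<Rightarrow> 'k) \<Rightarrow> (int \<Rightarrow> ('k^'n) set) \<Rightarrow> ('k^'n^'n) set" where
  "E2 Q X = {N \<in> tilde_M Q. \<forall>a. \<forall>x\<in>X a. N *v x \<in> X (a + 2)}"

definition O_Q :: "('k::field^'n \<Rightarrow> 'k) \<Rightarrow> ('k^'n^'n) set" where
  "O_Q Q = {T. invertible T \<and> (\<forall>x. Q (T *v x) = Q x)}"

text \<open>Zariski topology on the space of matrices: polynomial functions in the entries.\<close>

inductive_set mat_polys :: "('k::field^'n^'n \<Rightarrow> 'k) set" where
  const: "(\<lambda>A. c) \<in> mat_polys"
| entry: "(\<lambda>A. A $ i $ j) \<in> mat_polys"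
| add: "f \<in> mat_polys \<Longrightarrow> g \<in> mat_polys \<Longrightarrow> (\<lambda>A. f A + g A) \<in> mat_polys"
| mult: "f \<in> mat_polys \<Longrightarrow> g \<in> mat_polys \<Longrightarrow> (\<lambda>A. f A * g A) \<in> mat_polys"

definition zariski_closedin :: "('k::field^'n^'n) set \<Rightarrow> ('k^'n^'n) set \<Rightarrow> bool" where
  "zariski_closedin S C \<longleftrightarrow> (\<exists>F \<subseteq> mat_polys. C = S \<inter> {A. \<forall>f\<in>F. f A = 0})"

definition zariski_connected :: "('k::field^'n^'n) set \<Rightarrow> bool" where
  "zariski_connected S \<longleftrightarrow>
     \<not> (\<exists>C1 C2. zariski_closedin S C1 \<and> zariski_closedin S C2 \<and> C1 \<inter> C2 = {} \<and>
               C1 \<union> C2 = S \<and> C1 \<noteq> {} \<and> C2 \<noteq> {})"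

definition identity_component :: "('k::field^'n^'n) set \<Rightarrow> ('k^'n^'n) set" where
  "identity_component S = \<Union>{C. C \<subseteq> S \<and> mat 1 \<in> C \<and> zariski_connected C}"

definition alg_closed :: "'k::field itself \<Rightarrow> bool" where
  "alg_closed _ \<longleftrightarrow> (\<forall>p::'k poly. 0 < degree p \<longrightarrow> (\<exists>x. poly p x = 0))"

definition is_alg_closure :: "('k::field \<Rightarrow> 'K::field) \<Rightarrow> bool" where
  "is_alg_closure \<phi> \<longleftrightarrow>
     \<phi> 1 = 1 \<and> (\<forall>a b. \<phi> (a + b) = \<phi> a + \<phi> b) \<and> (\<forall>a b. \<phi> (a * b) = \<phi> a * \<phi> b) \<and>
     alg_closed TYPE('K) \<and>
     (\<forall>y. \<exists>p::'k poly. p \<noteq> 0 \<and> poly (map_poly \<phi> p) y = 0)"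

text \<open>Qt is the extension of Q to K^n = V tensor K.\<close>
definition extends_qf :: "('k::field \<Rightarrow> 'K::field) \<Rightarrow> ('k^'n \<Rightarrow> 'k) \<Rightarrow> ('K^'n \<Rightarrow> 'K) \<Rightarrow> bool" where
  "extends_qf \<phi> Q Qt \<longleftrightarrow> quadratic_form Qt \<and>
     (\<forall>i. Qt (axis i 1) = \<phi> (Q (axis i 1))) \<and>
     (\<forall>i j. polar Qt (axis i 1) (axis j 1) = \<phi> (polar Q (axis i 1) (axis j 1)))"

definition SO_Q_closed :: "('k::field^'n \<Rightarrow> 'k) \<Rightarrow> ('k^'n^'n) set" where
  "SO_Q_closed Q = identity_component (O_Q Q)"

definition SO_Q_finite :: "('k::field \<Rightarrow> 'K::field) \<Rightarrow> ('k^'n \<Rightarrow> 'k) \<Rightarrow> ('k^'n^'n) set" where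
  "SO_Q_finite \<phi> Q = {T \<in> O_Q Q. \<forall>Qt. extends_qf \<phi> Q Qt \<longrightarrow> map_matrix \<phi> T \<in> SO_Q_closed Qt}"

end

theory Submission
  imports Defs
begin


section \<open>Basic facts on quadratic forms\<close>

context
  fixes Q :: "'k::field^'n \<Rightarrow> 'k"
  assumes qf: "quadratic_form Q"
begin

lemma qf_scale: "Q (c *s x) = c^2 * Q x"
  using qf unfolding quadratic_form_def by blast

lemma pol_addL: "polar Q (x + y) z = polar Q x z + polar Q y z"
  using qf unfolding quadratic_form_def by blast

lemma pol_scaleL: "polar Q (c *s x) y = c * polar Q x y"
  using qf unfolding quadratic_form_def by blast

lemma pol_sym: "polar Q x y = polar Q y x"
  unfolding polar_def by (simp add: add.commute)

lemma pol_addR: "polar Q z (x + y) = polar Q z x + polar Q z y"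
  using pol_addL[of x y z] pol_sym[of z "x+y"] pol_sym[of z x] pol_sym[of z y] by simp

lemma pol_scaleR: "polar Q y (c *s x) = c * polar Q y x"
  using pol_scaleL[of c x y] pol_sym[of y "c *s x"] pol_sym[of y x] by simp

lemma qf_0: "Q 0 = 0"
  using qf_scale[of 0 0] by simp

lemma pol_0L: "polar Q 0 y = 0"
  using pol_scaleL[of 0 0 y] by simp

lemma pol_0R: "polar Q y 0 = 0"
  using pol_0L[of y] pol_sym[of y 0] by simp

lemma qf_add: "Q (x + y) = Q x + Q y + polar Q x y"
  unfolding polar_def by simp

lemma pol_negL: "polar Q (- x) y = - polar Q x y"
  using pol_scaleL[of "-1" x y] by (simp add: vector_smult_lneg)

lemma pol_negR: "polar Q y (- x) = - polar Q y x"
  using pol_negL[of x y] pol_sym[of y "-x"] pol_sym[of y x] by simp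

lemma pol_diffL: "polar Q (x - y) z = polar Q x z - polar Q y z"
  using pol_addL[of x "-y" z] pol_negL by simp

lemma pol_diffR: "polar Q z (x - y) = polar Q z x - polar Q z y"
  using pol_diffL[of x y z] pol_sym[of z "x-y"] pol_sym[of z x] pol_sym[of z y] by simp

lemma pol_sumL: "polar Q (\<Sum>i\<in>F. f i) y = (\<Sum>i\<in>F. polar Q (f i) y)"
  by (induction F rule: infinite_finite_induct) (auto simp: pol_0L pol_addL)

lemma pol_sumR: "polar Q y (\<Sum>i\<in>F. f i) = (\<Sum>i\<in>F. polar Q y (f i))"
  by (induction F rule: infinite_finite_induct) (auto simp: pol_0R pol_addR)

lemma pol_self: "polar Q x x = 2 * Q x"
proof -
  have e: "(2::'k) *s x = x + x"
    using vector_sadd_rdistrib[of "1::'k" 1 x] by (simp only: one_add_one vector_smult_lid)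
  define t where "t = Q (x + x)"
  have h1: "t = 2^2 * Q x" unfolding t_def using qf_scale[of 2 x] by (simp only: e)
  have h2: "t = Q x + Q x + polar Q x x" unfolding t_def by (rule qf_add)
  from h1 h2 show ?thesis by (simp add: algebra_simps)
qed

lemma qf_neg: "Q (- x) = Q x"
proof -
  have "(-1::'k) *s x = - x" using vector_smult_lneg[of 1 x] by (simp only: vector_smult_lid)
  then show ?thesis using qf_scale[of "-1" x] by simp
qed

lemma qf_sum_eq:
  assumes "finite I"
    and "\<And>i. i \<in> I \<Longrightarrow> Q (w i) = Q (w' i)"
    and "\<And>i j. i \<in> I \<Longrightarrow> j \<in> I \<Longrightarrow> i \<noteq> j \<Longrightarrow> polar Q (w i) (w j) = polar Q (w' i) (w' j)"
  shows "Q (\<Sum>i\<in>I. w i) = Q (\<Sum>i\<in>I. w' i)"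
  using assms
proof (induction I rule: finite_induct)
  case empty
  then show ?case by simp
next
  case (insert x F)
  have "Q (\<Sum>i\<in>insert x F. w i) = Q (w x) + Q (\<Sum>i\<in>F. w i) + (\<Sum>i\<in>F. polar Q (w x) (w i))"
    using insert.hyps by (simp add: qf_add pol_sumR)
  also have "\<dots> = Q (w' x) + Q (\<Sum>i\<in>F. w' i) + (\<Sum>i\<in>F. polar Q (w' x) (w' i))"
  proof -
    have "Q (w x) = Q (w' x)" using insert.prems(1) by simp
    moreover have "Q (\<Sum>i\<in>F. w i) = Q (\<Sum>i\<in>F. w' i)"
      by (rule insert.IH) (use insert.prems in auto)
    moreover have "(\<Sum>i\<in>F. polar Q (w x) (w i)) = (\<Sum>i\<in>F. polar Q (w' x) (w' i))"
      by (rule sum.cong) (use insert in auto)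
    ultimately show ?thesis by simp
  qed
  also have "\<dots> = Q (\<Sum>i\<in>insert x F. w' i)"
    using insert.hyps by (simp add: qf_add pol_sumR)
  finally show ?case .
qed

end

lemma mv_scale: "(A::'a::comm_ring_1^'n^'m) *v (c *s x) = c *s (A *v x)"
  by (simp add: vec_eq_iff matrix_vector_mult_def sum_distrib_left mult.left_commute)

lemma mv_sum: "(A::'a::comm_ring_1^'n^'m) *v (\<Sum>i\<in>F. f i) = (\<Sum>i\<in>F. A *v f i)"
  by (induction F rule: infinite_finite_induct) (auto simp: matrix_vector_right_distrib)

lemma sum_mv: "(\<Sum>i\<in>F. M i) *v (x::'a::comm_ring_1^'n) = (\<Sum>i\<in>F. M i *v x)"
  by (induction F rule: infinite_finite_induct) (auto simp: matrix_vector_mult_add_rdistrib)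

lemma sm_sum: "(c::'a::comm_ring_1) *s (\<Sum>i\<in>F. f i) = (\<Sum>i\<in>F. c *s f i)"
  by (simp add: vec_eq_iff sum_distrib_left)

definition msc :: "'a::times \<Rightarrow> 'a^'n^'m \<Rightarrow> 'a^'n^'m" where
  "msc c M = (\<chi> i j. c * M $ i $ j)"

lemma msc_mv: "msc c (M::'a::comm_ring_1^'n^'m) *v x = c *s (M *v x)"
  by (simp add: vec_eq_iff matrix_vector_mult_def msc_def sum_distrib_left mult.assoc)

lemma msc_nth[simp]: "msc c M $ i $ j = c * M $ i $ j"
  by (simp add: msc_def)



definition polyfun :: "('a::field \<Rightarrow> 'a) \<Rightarrow> bool" where
  "polyfun f \<longleftrightarrow> (\<exists>p. \<forall>s. f s = poly p s)"

lemma polyfun_const[intro]: "polyfun (\<lambda>s. c)"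
  unfolding polyfun_def by (rule exI[of _ "[:c:]"]) simp

lemma polyfun_id[intro]: "polyfun (\<lambda>s. s)"
  unfolding polyfun_def by (rule exI[of _ "[:0,1:]"]) simp

lemma polyfun_add[intro]: "polyfun f \<Longrightarrow> polyfun g \<Longrightarrow> polyfun (\<lambda>s. f s + g s)"
  unfolding polyfun_def by (metis poly_add)

lemma polyfun_mult[intro]: "polyfun f \<Longrightarrow> polyfun g \<Longrightarrow> polyfun (\<lambda>s. f s * g s)"
  unfolding polyfun_def by (metis poly_mult)

lemma polyfun_power[intro]: "polyfun f \<Longrightarrow> polyfun (\<lambda>s. f s ^ k)"
  by (induction k) auto

lemma polyfun_sum[intro]: "(\<And>i. i \<in> F \<Longrightarrow> polyfun (f i)) \<Longrightarrow> polyfun (\<lambda>s. \<Sum>i\<in>F. f i s)"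
  by (induction F rule: infinite_finite_induct) auto

lemma polyfun_if[intro]: "polyfun f \<Longrightarrow> polyfun g \<Longrightarrow> polyfun (\<lambda>s. if P then f s else g s)"
  by (cases P) auto

lemma polyfun_zero_or_finite:
  assumes "polyfun f"
  shows "(\<forall>s. f s = 0) \<or> finite {s. f s = 0}"
proof -
  obtain p where p: "\<And>s. f s = poly p s" using assms unfolding polyfun_def by blast
  show ?thesis
  proof (cases "p = 0")
    case True then show ?thesis using p by simp
  next
    case False then show ?thesis using p poly_roots_finite[of p] by simp
  qed
qed

lemma mat_polys_polyfun:
  assumes "f \<in> mat_polys" and "\<And>i j. polyfun (\<lambda>s. c s $ i $ j)"
  shows "polyfun (\<lambda>s. f (c s))"
  using assms(1) by (induction rule: mat_polys.induct) (auto intro: assms(2))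

lemma curve_connected:
  fixes c :: "'K::field \<Rightarrow> 'K^'n^'n"
  assumes inf: "infinite (UNIV :: 'K set)"
    and pf: "\<And>i j. polyfun (\<lambda>s. c s $ i $ j)"
  shows "zariski_connected (range c)"
  unfolding zariski_connected_def
proof
  assume "\<exists>C1 C2. zariski_closedin (range c) C1 \<and> zariski_closedin (range c) C2 \<and> C1 \<inter> C2 = {} \<and>
               C1 \<union> C2 = range c \<and> C1 \<noteq> {} \<and> C2 \<noteq> {}"
  then obtain C1 C2 where cl1: "zariski_closedin (range c) C1" and cl2: "zariski_closedin (range c) C2"
    and dis: "C1 \<inter> C2 = {}" and un: "C1 \<union> C2 = range c" and ne1: "C1 \<noteq> {}" and ne2: "C2 \<noteq> {}"
    by blast
  obtain F1 where F1: "F1 \<subseteq> mat_polys" "C1 = range c \<inter> {A. \<forall>f\<in>F1. f A = 0}"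
    using cl1 unfolding zariski_closedin_def by blast
  obtain F2 where F2: "F2 \<subseteq> mat_polys" "C2 = range c \<inter> {A. \<forall>f\<in>F2. f A = 0}"
    using cl2 unfolding zariski_closedin_def by blast
  have fz: "{s. \<forall>f\<in>F. f (c s) = 0} = UNIV \<or> finite {s. \<forall>f\<in>F. f (c s) = 0}"
    if "F \<subseteq> mat_polys" for F
  proof (cases "\<forall>f\<in>F. \<forall>s. f (c s) = 0")
    case True then show ?thesis by blast
  next
    case False
    then obtain f s0 where f: "f \<in> F" "f (c s0) \<noteq> 0" by blast
    have "polyfun (\<lambda>s. f (c s))" using mat_polys_polyfun[of f c] f that pf by blast
    then have "finite {s. f (c s) = 0}" using polyfun_zero_or_finite f by blast
    then show ?thesis by (rule disjI2[OF finite_subset[rotated]]) (use f in blast)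
  qed
  let ?Z1 = "{s. \<forall>f\<in>F1. f (c s) = 0}" and ?Z2 = "{s. \<forall>f\<in>F2. f (c s) = 0}"
  have z1: "s \<in> ?Z1 \<longleftrightarrow> c s \<in> C1" for s by (simp add: F1(2))
  have z2: "s \<in> ?Z2 \<longleftrightarrow> c s \<in> C2" for s by (simp add: F2(2))
  have U: "?Z1 \<union> ?Z2 = UNIV" using un z1 z2 by blast
  have D: "?Z1 \<inter> ?Z2 = {}" using dis z1 z2 by blast
  have N1: "?Z1 \<noteq> {}"
  proof -
    obtain A where "A \<in> C1" using ne1 by blast
    then obtain s where "A = c s" "c s \<in> C1" using F1(2) by blast
    then show ?thesis using z1 by blast
  qed
  have N2: "?Z2 \<noteq> {}"
  proof -
    obtain A where "A \<in> C2" using ne2 by blast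
    then obtain s where "A = c s" "c s \<in> C2" using F2(2) by blast
    then show ?thesis using z2 by blast
  qed
  have "?Z1 \<noteq> UNIV" using D N2 by blast
  then have "finite ?Z1" using fz[OF F1(1)] by blast
  moreover have "?Z2 \<noteq> UNIV" using D N1 by blast
  then have "finite ?Z2" using fz[OF F2(1)] by blast
  ultimately have "finite (?Z1 \<union> ?Z2)" by blast
  then show False using U inf by simp
qed

lemma curve_identity_component:
  fixes c :: "'K::field \<Rightarrow> 'K^'n^'n"
  assumes inf: "infinite (UNIV :: 'K set)"
    and pf: "\<And>i j. polyfun (\<lambda>s. c s $ i $ j)"
    and S: "\<And>s. c s \<in> S" and c0: "c 0 = mat 1"
  shows "c t \<in> identity_component S"
proof -
  have "range c \<subseteq> S" "mat 1 \<in> range c" "zariski_connected (range c)"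
    using S c0 curve_connected[OF inf pf] by (blast, metis rangeI, blast)
  then show ?thesis unfolding identity_component_def by blast
qed

lemma alg_closed_infinite:
  assumes "alg_closed TYPE('K::field)"
  shows "infinite (UNIV :: 'K set)"
proof
  assume fin: "finite (UNIV :: 'K set)"
  define p :: "'K poly" where "p = (\<Prod>a\<in>UNIV. [:-a, 1:]) + 1"
  have dprod: "degree (\<Prod>a\<in>(UNIV::'K set). [:-a, 1:]) = card (UNIV :: 'K set)"
    by (subst degree_prod_eq_sum_degree) auto
  have "card (UNIV :: 'K set) > 0" using fin by (simp add: finite_UNIV_card_ge_0)
  then have "degree p = card (UNIV :: 'K set)" unfolding p_def using dprod
    by (metis degree_add_eq_left degree_1)
  then have "0 < degree p" using \<open>card (UNIV :: 'K set) > 0\<close> by simp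
  then obtain x where "poly p x = 0" using assms unfolding alg_closed_def by blast
  moreover have "poly (\<Prod>a\<in>(UNIV::'K set). [:-a, 1:]) x = 0"
    using fin by (simp add: poly_prod prod_zero_iff)
  ultimately show False unfolding p_def by simp
qed



lemma nilpotent_inj:
  fixes N :: "'K::field^'n^'n"
  assumes nil: "mpow N m = 0" and z: "(mat 1 + N) *v z = 0"
  shows "z = 0"
proof -
  have Nz: "N *v z = - z" using z by (simp add: matrix_vector_mult_add_rdistrib eq_neg_iff_add_eq_0 add.commute)
  have "mpow N k *v z = ((-1)^k) *s z" for k
  proof (induction k)
    case 0 then show ?case by simp
  next
    case (Suc k)
    have "mpow N (Suc k) *v z = N *v (mpow N k *v z)" by (simp add: matrix_vector_mul_assoc)
    also have "\<dots> = ((-1)^k) *s (N *v z)" using Suc by (simp add: mv_scale)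
    also have "\<dots> = ((-1)^Suc k) *s z" unfolding Nz by (simp add: vec_eq_iff)
    finally show ?case .
  qed
  from this[of m] nil have "((-1::'K)^m) *s z = 0" by simp
  then show ?thesis by simp
qed

lemma inj_invertible:
  fixes M :: "'K::field^'n^'n"
  assumes "\<And>x. M *v x = 0 \<Longrightarrow> x = 0"
  shows "invertible M"
  using assms invertible_left_inverse matrix_left_invertible_ker by blast

lemma nilpotent_invertible:
  fixes N :: "'K::field^'n^'n"
  assumes nil: "mpow N m = 0"
  shows "invertible (mat 1 + N)"
  using inj_invertible nilpotent_inj[OF nil] by blast

lemma curve_lemma:
  fixes q :: "'K::field^'n \<Rightarrow> 'K" and P :: "int \<Rightarrow> 'K^'n^'n" and N :: "'K^'n^'n" and A :: "int set"
  assumes inf: "infinite (UNIV :: 'K set)" and qf: "quadratic_form q" and finA: "finite A"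
    and sumP: "sum P A = mat 1"
    and PP: "\<And>a b. a \<in> A \<Longrightarrow> b \<in> A \<Longrightarrow> P a ** P b = (if a = b then P a else 0)"
    and orth: "\<And>a b x y. a \<in> A \<Longrightarrow> b \<in> A \<Longrightarrow> a + b \<noteq> 0 \<Longrightarrow> polar q (P a *v x) (P b *v y) = 0"
    and iso: "\<And>a x. a \<in> A \<Longrightarrow> a \<noteq> 0 \<Longrightarrow> q (P a *v x) = 0"
    and shift: "\<And>a b. a \<in> A \<Longrightarrow> b \<in> A \<Longrightarrow> a \<le> b \<Longrightarrow> P a ** N ** P b = 0"
    and isoN: "\<And>x. q ((mat 1 + N) *v x) = q x"
    and nil: "mpow N m = 0"
  shows "mat 1 + N \<in> identity_component (O_Q q)"
proof -
  define Lv where "Lv s x = (\<Sum>a\<in>A. (s powi a) *s (P a *v x))" for s :: 'K and x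
  have sumPx: "(\<Sum>a\<in>A. P a *v x) = x" for x
    using sumP sum_mv[of P A x] by simp
  have Lv_add: "Lv s (x + y) = Lv s x + Lv s y" for s x y
    unfolding Lv_def by (simp add: matrix_vector_right_distrib vector_add_ldistrib sum.distrib)
  have Lv_0: "Lv s 0 = 0" for s unfolding Lv_def by simp
  have Lv_1: "Lv 1 x = x" for x unfolding Lv_def using sumPx by simp
  have LL: "Lv (inverse s) (Lv s x) = x" if s: "s \<noteq> 0" for s x
  proof -
    have "Lv (inverse s) (Lv s x) = (\<Sum>a\<in>A. \<Sum>b\<in>A. (inverse s powi a * s powi b) *s ((P a ** P b) *v x))"
      unfolding Lv_def by (simp add: mv_sum mv_scale vector_smult_assoc sum_distrib_left matrix_vector_mul_assoc sm_sum)
    also have "\<dots> = (\<Sum>a\<in>A. \<Sum>b\<in>A. (if a = b then (inverse s powi a * s powi b) *s (P a *v x) else 0))"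
      by (intro sum.cong refl) (simp add: PP)
    also have "\<dots> = (\<Sum>a\<in>A. (inverse s powi a * s powi a) *s (P a *v x))"
      using finA by (simp add: sum.delta)
    also have "\<dots> = (\<Sum>a\<in>A. P a *v x)"
      using s by (simp add: power_int_inverse)
    finally show ?thesis using sumPx by simp
  qed
  have qL: "q (Lv s y) = q y" if s: "s \<noteq> 0" for s y
  proof -
    have "q (Lv s y) = q (\<Sum>a\<in>A. P a *v y)"
      unfolding Lv_def
    proof (rule qf_sum_eq[OF qf finA])
      fix a assume a: "a \<in> A"
      show "q ((s powi a) *s (P a *v y)) = q (P a *v y)"
        using iso[OF a] by (cases "a = 0") (auto simp: qf_scale[OF qf])
    next
      fix a b assume a: "a \<in> A" and b: "b \<in> A" and ab: "a \<noteq> b"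
      show "polar q ((s powi a) *s (P a *v y)) ((s powi b) *s (P b *v y)) = polar q (P a *v y) (P b *v y)"
      proof (cases "a + b = 0")
        case True
        then have "b = - a" by simp
        then have "s powi a * s powi b = 1" using s by (simp add: power_int_minus)
        then show ?thesis by (simp add: pol_scaleL[OF qf] pol_scaleR[OF qf] mult.commute)
      next
        case False
        then show ?thesis using orth[OF a b] by (simp add: pol_scaleL[OF qf] pol_scaleR[OF qf])
      qed
    qed
    then show ?thesis using sumPx by simp
  qed
  define C where "C s = mat 1 + (\<Sum>a\<in>A. \<Sum>b\<in>A. msc (if b < a then s ^ nat (a - b) else 0) (P a ** N ** P b))"
    for s :: 'K
  have C_mv: "C s *v x = x + (\<Sum>a\<in>A. \<Sum>b\<in>A. (if b < a then s ^ nat (a - b) else 0) *s (P a *v (N *v (P b *v x))))"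
    for s x
    unfolding C_def by (simp add: matrix_vector_mult_add_rdistrib sum_mv msc_mv matrix_vector_mul_assoc matrix_mul_assoc)
  have C_eq: "C s *v x = Lv s ((mat 1 + N) *v Lv (inverse s) x)" if s: "s \<noteq> 0" for s x
  proof -
    have "Lv s ((mat 1 + N) *v Lv (inverse s) x) = Lv s (Lv (inverse s) x) + Lv s (N *v Lv (inverse s) x)"
      by (simp add: matrix_vector_mult_add_rdistrib Lv_add)
    also have "Lv s (Lv (inverse s) x) = x" using LL[of "inverse s" x] s by simp
    also have "Lv s (N *v Lv (inverse s) x) =
       (\<Sum>a\<in>A. \<Sum>b\<in>A. (s powi a * inverse s powi b) *s (P a *v (N *v (P b *v x))))"
      unfolding Lv_def by (simp add: mv_sum mv_scale vector_smult_assoc sm_sum)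
    also have "\<dots> = (\<Sum>a\<in>A. \<Sum>b\<in>A. (if b < a then s ^ nat (a - b) else 0) *s (P a *v (N *v (P b *v x))))"
    proof (intro sum.cong refl)
      fix a b assume a: "a \<in> A" and b: "b \<in> A"
      show "(s powi a * inverse s powi b) *s (P a *v (N *v (P b *v x))) =
            (if b < a then s ^ nat (a - b) else 0) *s (P a *v (N *v (P b *v x)))"
      proof (cases "b < a")
        case True
        have "s powi (a + (- b)) = s powi a * s powi (- b)"
          using s by (rule power_int_add[OF disjI1])
        then have "s powi a * inverse s powi b = s powi (a + (- b))"
          by (simp add: power_int_minus power_int_inverse)
        moreover have "s powi (a + (- b)) = s ^ nat (a - b)"
        proof -
          have e: "a + (- b) = int (nat (a - b))" using True by simp
          show ?thesis unfolding e by (rule power_int_of_nat)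
        qed
        ultimately show ?thesis using True by simp
      next
        case False
        then have "P a *v (N *v (P b *v x)) = 0"
          using shift[OF a b] by (simp add: matrix_vector_mul_assoc matrix_mul_assoc)
        then show ?thesis by simp
      qed
    qed
    finally show ?thesis using C_mv by simp
  qed
  have C0: "C 0 = mat 1"
  proof -
    have "msc (if b < a then (0::'K) ^ nat (a - b) else 0) M = 0" for a b and M :: "'K^'n^'n"
      by (simp add: vec_eq_iff msc_def)
    then show ?thesis unfolding C_def by simp
  qed
  have C1: "C 1 = mat 1 + N"
    unfolding matrix_eq using C_eq[of 1] Lv_1 by simp
  have CO: "C s \<in> O_Q q" for s
  proof (cases "s = 0")
    case True
    have "invertible (mat 1 :: 'K^'n^'n)" unfolding invertible_def by (rule exI[of _ "mat 1"]) simp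
    then show ?thesis unfolding O_Q_def True C0 by simp
  next
    case False
    have "q (C s *v x) = q x" for x
      using C_eq[OF False, of x] qL[OF False] isoN qL[of "inverse s" x] False by simp
    moreover have "invertible (C s)"
    proof (rule inj_invertible)
      fix x assume "C s *v x = 0"
      then have "Lv s ((mat 1 + N) *v Lv (inverse s) x) = 0" using C_eq[OF False] by simp
      then have "Lv (inverse s) (Lv s ((mat 1 + N) *v Lv (inverse s) x)) = 0" using Lv_0 by simp
      then have "(mat 1 + N) *v Lv (inverse s) x = 0" using LL[OF False] by simp
      then have "Lv (inverse s) x = 0" using nilpotent_inj[OF nil] by blast
      then have "Lv (inverse (inverse s)) (Lv (inverse s) x) = 0" using Lv_0 by simp
      then show "x = 0" using LL[of "inverse s" x] False by simp
    qed
    ultimately show ?thesis unfolding O_Q_def by simp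
  qed
  have pf: "polyfun (\<lambda>s. C s $ i $ j)" for i j
  proof -
    have "C s $ i $ j = mat 1 $ i $ j + (\<Sum>a\<in>A. \<Sum>b\<in>A. (if b < a then s ^ nat (a - b) else 0) * (P a ** N ** P b) $ i $ j)" for s
      unfolding C_def by simp
    moreover have "polyfun (\<lambda>s. mat 1 $ i $ j + (\<Sum>a\<in>A. \<Sum>b\<in>A. (if b < a then s ^ nat (a - b) else 0) * (P a ** N ** P b) $ i $ j))"
      by (intro polyfun_add polyfun_sum polyfun_mult polyfun_if polyfun_power polyfun_id polyfun_const)
    ultimately show ?thesis by simp
  qed
  show ?thesis
    using curve_identity_component[OF inf pf CO C0, of 1] C1 by simp
qed



lemma filt_subspace: "Q_filtration Q X \<Longrightarrow> vec.subspace (X a)"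
proof -
  assume "Q_filtration Q X"
  then have "lin_subspace (X a)" unfolding Q_filtration_def by simp
  then show ?thesis unfolding lin_subspace_def vec.subspace_def by simp
qed

lemma filt_mono: "Q_filtration Q X \<Longrightarrow> a \<le> b \<Longrightarrow> X b \<subseteq> X a"
  unfolding Q_filtration_def by simp

lemma filt_iso: "Q_filtration Q X \<Longrightarrow> 1 \<le> a \<Longrightarrow> x \<in> X a \<Longrightarrow> Q x = 0"
  unfolding Q_filtration_def by simp

lemma filt_perp: "Q_filtration Q X \<Longrightarrow> 1 \<le> a \<Longrightarrow> X (1 - a) = perp Q (X a)"
  unfolding Q_filtration_def by simp

lemma filt_B0:
  assumes f: "Q_filtration Q X" and x: "x \<in> X 1" and y: "y \<in> X 1"
  shows "polar Q x y = 0"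
proof -
  have "x + y \<in> X 1" using filt_subspace[OF f] x y vec.subspace_add by blast
  then have "Q (x + y) = 0" "Q x = 0" "Q y = 0" using filt_iso[OF f, of 1] x y by auto
  then show ?thesis unfolding polar_def by simp
qed

lemmas polsimps = pol_addL pol_addR pol_scaleL pol_scaleR pol_diffL pol_diffR pol_sumL pol_sumR
  pol_negL pol_negR pol_0L pol_0R

locale splitdata =
  fixes Q :: "'k::field^'n \<Rightarrow> 'k" and X :: "int \<Rightarrow> ('k^'n) set"
    and U :: "('k^'n) set" and du :: "'k^'n \<Rightarrow> 'k^'n" and d :: "'k^'n \<Rightarrow> int" and a0 :: int
  assumes qf: "quadratic_form Q" and filt: "Q_filtration Q X"
    and finU: "finite U" and UX: "U \<subseteq> X 1"
    and spanX: "\<And>a. 1 \<le> a \<Longrightarrow> X a \<subseteq> vec.span (U \<inter> X a)"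
    and dual: "\<And>u v. u \<in> U \<Longrightarrow> v \<in> U \<Longrightarrow> polar Q v (du u) = (if v = u then 1 else 0)"
    and duQ: "\<And>u. u \<in> U \<Longrightarrow> Q (du u) = 0"
    and dudu: "\<And>u v. u \<in> U \<Longrightarrow> v \<in> U \<Longrightarrow> polar Q (du u) (du v) = 0"
    and dmem: "\<And>u c. u \<in> U \<Longrightarrow> u \<in> X c \<longleftrightarrow> c \<le> d u"
    and d1: "\<And>u. u \<in> U \<Longrightarrow> 1 \<le> d u"
    and da0: "\<And>u. u \<in> U \<Longrightarrow> d u < a0" and a01: "1 \<le> a0"
begin

abbreviation B where "B \<equiv> polar Q"

lemmas ps = polsimps[OF qf]

lemma UU: "u \<in> U \<Longrightarrow> v \<in> U \<Longrightarrow> B u v = 0"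
  using filt_B0[OF filt] UX by blast

lemma dual': "u \<in> U \<Longrightarrow> v \<in> U \<Longrightarrow> B (du u) v = (if v = u then 1 else 0)"
  using dual[of u v] pol_sym[OF qf, of "du u" v] by simp

definition S :: "('k^'n \<Rightarrow> 'k) \<Rightarrow> ('k^'n \<Rightarrow> 'k) \<Rightarrow> 'k^'n" where
  "S f g = (\<Sum>u\<in>U. f u *s u + g u *s du u)"

lemma S_cong: "(\<And>u. u \<in> U \<Longrightarrow> f u = f' u) \<Longrightarrow> (\<And>u. u \<in> U \<Longrightarrow> g u = g' u) \<Longrightarrow> S f g = S f' g'"
  unfolding S_def by (rule sum.cong) auto

lemma S_zero: "S (\<lambda>u. 0) (\<lambda>u. 0) = 0"
  unfolding S_def by simp

lemma S_add: "S (\<lambda>u. f u + f' u) (\<lambda>u. g u + g' u) = S f g + S f' g'"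
  unfolding S_def by (simp add: sum.distrib vector_sadd_rdistrib algebra_simps)

lemma S_scale: "S (\<lambda>u. c * f u) (\<lambda>u. c * g u) = c *s S f g"
  unfolding S_def by (simp add: sm_sum vector_add_ldistrib vector_smult_assoc)

lemma S_sum: "finite A \<Longrightarrow> (\<Sum>a\<in>A. S (f a) (g a)) = S (\<lambda>u. \<Sum>a\<in>A. f a u) (\<lambda>u. \<Sum>a\<in>A. g a u)"
proof (induction A rule: finite_induct)
  case empty then show ?case using S_zero by simp
next
  case (insert x F)
  then show ?case using S_add[of "f x" "\<lambda>u. \<Sum>a\<in>F. f a u" "g x" "\<lambda>u. \<Sum>a\<in>F. g a u"] by simp
qed

lemma B_S: "B y (S f g) = (\<Sum>u\<in>U. f u * B y u + g u * B y (du u))"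
  unfolding S_def by (simp add: ps)

lemma S_alpha: "v \<in> U \<Longrightarrow> B (S f g) (du v) = f v"
proof -
  assume v: "v \<in> U"
  have "B (S f g) (du v) = (\<Sum>u\<in>U. f u * B u (du v) + g u * B (du u) (du v))"
    unfolding S_def by (simp add: ps)
  also have "\<dots> = (\<Sum>u\<in>U. if u = v then f u else 0)"
    by (rule sum.cong) (use v dual dudu in auto)
  finally show ?thesis using v finU by simp
qed

lemma S_beta: "v \<in> U \<Longrightarrow> B (S f g) v = g v"
proof -
  assume v: "v \<in> U"
  have "B (S f g) v = (\<Sum>u\<in>U. f u * B u v + g u * B (du u) v)"
    unfolding S_def by (simp add: ps)
  also have "\<dots> = (\<Sum>u\<in>U. if u = v then g u else 0)"
    by (rule sum.cong) (use v dual' UU in auto)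
  finally show ?thesis using v finU by simp
qed

lemma Q_S_left: "Q (S f (\<lambda>u. 0)) = 0"
proof -
  have "Q (S f (\<lambda>u. 0)) = Q (\<Sum>u\<in>U. (0::'k^'n))"
    unfolding S_def
  proof (rule qf_sum_eq[OF qf finU])
    fix u assume "u \<in> U"
    then show "Q (f u *s u + 0 *s du u) = Q 0"
      using filt_iso[OF filt, of 1 u] UX by (auto simp: qf_scale[OF qf] qf_0[OF qf])
  next
    fix u v assume "u \<in> U" "v \<in> U"
    then show "B (f u *s u + 0 *s du u) (f v *s v + 0 *s du v) = B 0 0"
      using UU by (simp add: ps)
  qed
  then show ?thesis using qf_0[OF qf] by simp
qed

lemma Q_S_right: "Q (S (\<lambda>u. 0) g) = 0"
proof -
  have "Q (S (\<lambda>u. 0) g) = Q (\<Sum>u\<in>U. (0::'k^'n))"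
    unfolding S_def
  proof (rule qf_sum_eq[OF qf finU])
    fix u assume "u \<in> U"
    then show "Q (0 *s u + g u *s du u) = Q 0"
      using duQ by (auto simp: qf_scale[OF qf] qf_0[OF qf])
  next
    fix u v assume "u \<in> U" "v \<in> U"
    then show "B (0 *s u + g u *s du u) (0 *s v + g v *s du v) = B 0 0"
      using dudu by (simp add: ps)
  qed
  then show ?thesis using qf_0[OF qf] by simp
qed

definition al where "al u x = B x (du u)"
definition be where "be u x = B x u"

definition Rf where "Rf x = S (\<lambda>u. al u x) (\<lambda>u. be u x)"

definition Pf where
  "Pf a x = (if a = 0 then x - Rf x else 0) +
     S (\<lambda>u. if d u = a then al u x else 0) (\<lambda>u. if - d u = a then be u x else 0)"

lemma al_R: "v \<in> U \<Longrightarrow> al v (Rf x) = al v x"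
  unfolding Rf_def al_def using S_alpha by simp

lemma be_R: "v \<in> U \<Longrightarrow> be v (Rf x) = be v x"
  unfolding Rf_def be_def using S_beta by simp

lemma al_diff: "al v (x - y) = al v x - al v y"
  unfolding al_def by (simp add: ps)

lemma be_diff: "be v (x - y) = be v x - be v y"
  unfolding be_def by (simp add: ps)

lemma al_S: "v \<in> U \<Longrightarrow> al v (S f g) = f v"
  unfolding al_def using S_alpha by simp

lemma be_S: "v \<in> U \<Longrightarrow> be v (S f g) = g v"
  unfolding be_def using S_beta by simp

lemma al_add: "al v (x + y) = al v x + al v y"
  unfolding al_def by (simp add: ps)

lemma be_add: "be v (x + y) = be v x + be v y"
  unfolding be_def by (simp add: ps)

lemma al_0: "al v 0 = 0"
  unfolding al_def by (simp add: ps)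

lemma be_0: "be v 0 = 0"
  unfolding be_def by (simp add: ps)

lemma al_P: "v \<in> U \<Longrightarrow> al v (Pf a x) = (if d v = a then al v x else 0)"
  unfolding Pf_def using d1[of v] by (cases "a = 0") (simp_all add: al_add al_diff al_R al_S al_0)

lemma be_P: "v \<in> U \<Longrightarrow> be v (Pf a x) = (if - d v = a then be v x else 0)"
  unfolding Pf_def using d1[of v] by (cases "a = 0") (simp_all add: be_add be_diff be_R be_S be_0)


lemma Pf_nz: "a \<noteq> 0 \<Longrightarrow> Pf a x = S (\<lambda>u. if d u = a then al u x else 0) (\<lambda>u. if - d u = a then be u x else 0)"
  unfolding Pf_def by simp

lemma S_zero': "(\<And>u. u \<in> U \<Longrightarrow> f u = 0) \<Longrightarrow> (\<And>u. u \<in> U \<Longrightarrow> g u = 0) \<Longrightarrow> S f g = 0"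
  using S_cong[of f "\<lambda>u. 0" g "\<lambda>u. 0"] S_zero by simp

lemma Pf_0: "Pf 0 x = x - Rf x"
proof -
  have "S (\<lambda>u. if d u = 0 then al u x else 0) (\<lambda>u. if - d u = 0 then be u x else 0) = 0"
    by (rule S_zero') (use d1 in force)+
  then show ?thesis unfolding Pf_def by simp
qed

lemma Rf_S: "Rf (S f g) = S f g"
  unfolding Rf_def by (rule S_cong) (simp_all add: al_S be_S)

lemma Pf_Pf: "Pf a (Pf b x) = (if a = b then Pf a x else 0)"
proof (cases "a = 0")
  case a: True
  show ?thesis
  proof (cases "b = 0")
    case b: True
    have "Rf (Pf 0 x) = 0"
      unfolding Rf_def by (rule S_zero') (simp_all add: Pf_0 al_diff be_diff al_R be_R)
    then show ?thesis using a b by (simp add: Pf_0)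
  next
    case b: False
    show ?thesis using a b by (simp add: Pf_0 Pf_nz[OF b] Rf_S)
  qed
next
  case a: False
  show ?thesis
  proof (cases "a = b")
    case True
    have "Pf a (Pf b x) = S (\<lambda>u. if d u = a then al u (Pf b x) else 0) (\<lambda>u. if - d u = a then be u (Pf b x) else 0)"
      by (rule Pf_nz[OF a])
    also have "\<dots> = S (\<lambda>u. if d u = a then al u x else 0) (\<lambda>u. if - d u = a then be u x else 0)"
      by (rule S_cong) (use True in \<open>simp_all add: al_P be_P\<close>)
    also have "\<dots> = Pf a x" by (rule Pf_nz[OF a, symmetric])
    finally show ?thesis using True by simp
  next
    case False
    have "S (\<lambda>u. if d u = a then al u (Pf b x) else 0) (\<lambda>u. if - d u = a then be u (Pf b x) else 0) = 0"
      by (rule S_zero') (use False in \<open>simp_all add: al_P be_P\<close>)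
    then show ?thesis using a False by (simp add: Pf_nz)
  qed
qed

abbreviation "AA \<equiv> {-a0..a0}"

lemma Pf_sum: "(\<Sum>a\<in>AA. Pf a x) = x"
proof -
  have "(\<Sum>a\<in>AA. Pf a x) = (\<Sum>a\<in>AA. (if a = 0 then x - Rf x else 0)) +
      (\<Sum>a\<in>AA. S (\<lambda>u. if d u = a then al u x else 0) (\<lambda>u. if - d u = a then be u x else 0))"
    unfolding Pf_def by (simp add: sum.distrib)
  also have "(\<Sum>a\<in>AA. (if a = 0 then x - Rf x else 0)) = x - Rf x"
    using a01 by simp
  also have "(\<Sum>a\<in>AA. S (\<lambda>u. if d u = a then al u x else 0) (\<lambda>u. if - d u = a then be u x else 0))
     = S (\<lambda>u. \<Sum>a\<in>AA. if d u = a then al u x else 0) (\<lambda>u. \<Sum>a\<in>AA. if - d u = a then be u x else 0)"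
    by (rule S_sum) simp
  also have "\<dots> = Rf x"
    unfolding Rf_def by (rule S_cong) (use d1 da0 in \<open>force+\<close>)
  finally show ?thesis by simp
qed

lemma B_S': "B y (S f g) = (\<Sum>u\<in>U. f u * be u y + g u * al u y)"
  unfolding B_S al_def be_def ..

lemma Pf_orth: "a + b \<noteq> 0 \<Longrightarrow> B (Pf a x) (Pf b y) = 0"
proof (cases "b = 0")
  case b: False
  assume ab: "a + b \<noteq> 0"
  show ?thesis unfolding Pf_nz[OF b] B_S'
    by (rule sum.neutral) (use ab in \<open>auto simp: al_P be_P\<close>)
next
  case b: True
  assume ab: "a + b \<noteq> 0"
  then have a: "a \<noteq> 0" using b by simp
  have "B (Pf a x) (Pf b y) = B (Pf b y) (Pf a x)" by (rule pol_sym[OF qf])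
  also have "\<dots> = 0" unfolding Pf_nz[OF a] B_S'
  proof (rule sum.neutral, rule ballI)
    fix u assume u: "u \<in> U"
    then have "1 \<le> d u" by (rule d1)
    then show "(if d u = a then al u x else 0) * be u (Pf b y) + (if - d u = a then be u x else 0) * al u (Pf b y) = 0"
      using u b by (simp add: al_P be_P)
  qed
  finally show ?thesis .
qed

lemma Pf_iso: "a \<noteq> 0 \<Longrightarrow> Q (Pf a x) = 0"
proof -
  assume a: "a \<noteq> 0"
  show ?thesis
  proof (cases "a > 0")
    case True
    have "Pf a x = S (\<lambda>u. if d u = a then al u x else 0) (\<lambda>u. 0)"
      unfolding Pf_nz[OF a] by (rule S_cong) (use True d1 in force)+
    then show ?thesis using Q_S_left by simp
  next
    case False
    have "Pf a x = S (\<lambda>u. 0) (\<lambda>u. if - d u = a then be u x else 0)"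
      unfolding Pf_nz[OF a] by (rule S_cong) (use False d1 in force)+
    then show ?thesis using Q_S_right by simp
  qed
qed

lemma al_scale: "al v (c *s x) = c * al v x"
  unfolding al_def by (simp add: ps)

lemma be_scale: "be v (c *s x) = c * be v x"
  unfolding be_def by (simp add: ps)

lemma Rf_add: "Rf (x + y) = Rf x + Rf y"
  unfolding Rf_def S_add[symmetric] by (rule S_cong) (simp_all add: al_add be_add)

lemma Rf_scale: "Rf (c *s x) = c *s Rf x"
  unfolding Rf_def S_scale[symmetric] by (rule S_cong) (simp_all add: al_scale be_scale)

lemma Pf_add: "Pf a (x + y) = Pf a x + Pf a y"
proof (cases "a = 0")
  case True
  then show ?thesis by (simp add: Pf_0 Rf_add algebra_simps)
next
  case False
  show ?thesis unfolding Pf_nz[OF False] S_add[symmetric]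
    by (rule S_cong) (simp_all add: al_add be_add)
qed

lemma Pf_scale: "Pf a (c *s x) = c *s Pf a x"
proof (cases "a = 0")
  case True
  then show ?thesis by (simp add: Pf_0 Rf_scale vector_ssub_ldistrib)
next
  case False
  show ?thesis unfolding Pf_nz[OF False] S_scale[symmetric]
    by (rule S_cong) (simp_all add: al_scale be_scale)
qed

lemma Pf_linear: "Vector_Spaces.linear (*s) (*s) (Pf a)"
  by (simp add: Vector_Spaces.linear_iff vec.vector_space_axioms Pf_add Pf_scale)


lemma sub: "vec.subspace (X a)" by (rule filt_subspace[OF filt])

lemma perp_span:
  assumes "\<And>u. u \<in> V \<Longrightarrow> B z u = 0" and "w \<in> vec.span V"
  shows "B z w = 0"
  using assms(2)
proof (induction rule: vec.span_induct_alt)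
  case base then show ?case by (simp add: ps)
next
  case (step c x y) then show ?case using assms(1) by (simp add: ps)
qed

lemma du_mem: "u \<in> U \<Longrightarrow> du u \<in> X (- d u)"
proof -
  assume u: "u \<in> U"
  have e: "X (- d u) = perp Q (X (d u + 1))"
    using filt_perp[OF filt, of "d u + 1"] d1[OF u] by simp
  have "B (du u) w = 0" if w: "w \<in> X (d u + 1)" for w
  proof (rule perp_span)
    show "w \<in> vec.span (U \<inter> X (d u + 1))" using spanX[of "d u + 1"] d1[OF u] w by auto
  next
    fix v assume v: "v \<in> U \<inter> X (d u + 1)"
    then have "v \<noteq> u" using dmem[OF u, of "d u + 1"] by auto
    then show "B (du u) v = 0" using dual'[OF u] v by simp
  qed
  then show ?thesis unfolding e perp_def by blast
qed

lemma Pf_range: "Pf b x \<in> X b"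
proof (cases "b = 0")
  case True
  have e: "X 0 = perp Q (X 1)" using filt_perp[OF filt, of 1] by simp
  have "B (x - Rf x) w = 0" if w: "w \<in> X 1" for w
  proof (rule perp_span)
    show "w \<in> vec.span (U \<inter> X 1)" using spanX[of 1] w by auto
  next
    fix v assume v: "v \<in> U \<inter> X 1"
    show "B (x - Rf x) v = 0" using be_diff[of v x "Rf x"] be_R[of v x] v unfolding be_def by simp
  qed
  then show ?thesis unfolding True Pf_0 e perp_def by blast
next
  case False
  show ?thesis unfolding Pf_nz[OF False] S_def
  proof (rule vec.subspace_sum[OF sub])
    fix u assume u: "u \<in> U"
    have "(if d u = b then al u x else 0) *s u \<in> X b"
      using dmem[OF u, of b] vec.subspace_scale[OF sub] vec.subspace_0[OF sub] by auto
    moreover have "(if - d u = b then be u x else 0) *s du u \<in> X b"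
      using du_mem[OF u] vec.subspace_scale[OF sub] vec.subspace_0[OF sub] by auto
    ultimately show "(if d u = b then al u x else 0) *s u + (if - d u = b then be u x else 0) *s du u \<in> X b"
      using vec.subspace_add[OF sub] by blast
  qed
qed

lemma G1:
  assumes y: "y \<in> X c" and c: "1 \<le> c" and a: "a < c"
  shows "Pf a y = 0"
proof -
  have "y \<in> vec.span (U \<inter> X c)" using spanX[OF c] y by auto
  then obtain e where ye: "y = (\<Sum>v\<in>U \<inter> X c. e v *s v)"
    using vec.span_finite[of "U \<inter> X c"] finU by auto
  have yS: "y = S (\<lambda>v. if v \<in> X c then e v else 0) (\<lambda>v. 0)"
    unfolding ye S_def using finU by (simp add: sum.inter_restrict if_distrib[of "\<lambda>r. r *s v" for v] cong: if_cong)
  show ?thesis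
  proof (cases "a = 0")
    case True
    show ?thesis unfolding True Pf_0 using Rf_S yS by simp
  next
    case False
    show ?thesis unfolding Pf_nz[OF False]
    proof (rule S_zero')
      fix u assume u: "u \<in> U"
      show "(if d u = a then al u y else 0) = 0"
        using al_S[OF u, of "\<lambda>v. if v \<in> X c then e v else 0" "\<lambda>v. 0"] yS[symmetric] dmem[OF u, of c] a
        by auto
      show "(if - d u = a then be u y else 0) = 0"
        using be_S[OF u, of "\<lambda>v. if v \<in> X c then e v else 0" "\<lambda>v. 0"] yS[symmetric] by auto
    qed
  qed
qed

lemma G2:
  assumes y: "y \<in> perp Q (X g)" and g: "1 \<le> g" and a: "a \<le> - g"
  shows "Pf a y = 0"
proof -
  have a0: "a \<noteq> 0" using g a by simp
  show ?thesis unfolding Pf_nz[OF a0]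
  proof (rule S_zero')
    fix u assume u: "u \<in> U"
    show "(if d u = a then al u y else 0) = 0" using d1[OF u] g a by auto
    show "(if - d u = a then be u y else 0) = 0"
    proof (cases "- d u = a")
      case True
      then have "u \<in> X g" using dmem[OF u, of g] a by simp
      then have "be u y = 0" using y unfolding perp_def be_def by blast
      then show ?thesis by simp
    qed simp
  qed
qed

lemma Pf_shift:
  assumes hN: "\<And>b x. x \<in> X b \<Longrightarrow> N *v x \<in> X (b + 2)" and ab: "a \<le> b"
  shows "Pf a (N *v Pf b x) = 0"
proof -
  have y: "N *v Pf b x \<in> X (b + 2)" using hN Pf_range by blast
  show ?thesis
  proof (cases "1 \<le> b + 2")
    case True
    then show ?thesis using G1[OF y True] ab by simp
  next
    case False
    have e: "1 - (- b - 1) = b + 2" by simp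
    have "X (b + 2) = perp Q (X (- b - 1))" using filt_perp[OF filt, of "- b - 1"] False unfolding e by simp
    then show ?thesis using G2[of _ "- b - 1"] y False ab by simp
  qed
qed

definition PM where "PM a = matrix (Pf a)"

lemma PM_mv: "PM a *v x = Pf a x"
  unfolding PM_def by (rule matrix_works[OF Pf_linear])

lemma PM_props:
  "finite AA"
  "sum PM AA = mat 1"
  "\<And>a b. PM a ** PM b = (if a = b then PM a else 0)"
  "\<And>a b x y. a + b \<noteq> 0 \<Longrightarrow> polar Q (PM a *v x) (PM b *v y) = 0"
  "\<And>a x. a \<noteq> 0 \<Longrightarrow> Q (PM a *v x) = 0"
  "\<And>N a b. (\<And>b x. x \<in> X b \<Longrightarrow> N *v x \<in> X (b + 2)) \<Longrightarrow> a \<le> b \<Longrightarrow> PM a ** N ** PM b = 0"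
proof -
  show "finite AA" by simp
  show "sum PM AA = mat 1" unfolding matrix_eq by (simp add: sum_mv PM_mv Pf_sum)
  show "PM a ** PM b = (if a = b then PM a else 0)" for a b
    unfolding matrix_eq by (simp add: PM_mv Pf_Pf flip: matrix_vector_mul_assoc)
  show "polar Q (PM a *v x) (PM b *v y) = 0" if "a + b \<noteq> 0" for a b x y
    using Pf_orth[OF that] by (simp add: PM_mv)
  show "Q (PM a *v x) = 0" if "a \<noteq> 0" for a x
    using Pf_iso[OF that] by (simp add: PM_mv)
  show "PM a ** N ** PM b = 0" if "\<And>b x. x \<in> X b \<Longrightarrow> N *v x \<in> X (b + 2)" "a \<le> b" for N a b
    unfolding matrix_eq using Pf_shift[OF that] by (simp add: PM_mv flip: matrix_vector_mul_assoc)
qed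

end



lemma qf_diff: "quadratic_form Q \<Longrightarrow> Q (x - y) = Q x + Q y - polar Q x y"
proof -
  assume qf: "quadratic_form Q"
  have e: "x - y = x + (- y)" by simp
  have "Q (x + (- y)) = Q x + Q (- y) + polar Q x (- y)" by (rule qf_add[OF qf])
  also have "\<dots> = Q x + Q y - polar Q x y" using qf_neg[OF qf, of y] pol_negR[OF qf, of x y] by simp
  finally show ?thesis unfolding e .
qed

lemma rad0:
  assumes qf: "quadratic_form Q" and nd: "nondegenerate Q" and filt: "Q_filtration Q X"
    and w: "w \<in> X 1" and r: "\<And>y. polar Q w y = 0"
  shows "w = 0"
proof -
  have "w \<in> radical Q" "0 \<in> radical Q" unfolding radical_def using r pol_0L[OF qf] by auto
  moreover have "Q w = Q 0" using filt_iso[OF filt, of 1 w] w qf_0[OF qf] by simp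
  ultimately show ?thesis using nd unfolding nondegenerate_def inj_on_def by blast
qed

lemma dual_exists:
  fixes Q :: "'k::field^'n \<Rightarrow> 'k"
  assumes qf: "quadratic_form Q" and nd: "nondegenerate Q" and filt: "Q_filtration Q X"
  shows "finite U \<Longrightarrow> vec.independent U \<Longrightarrow> U \<subseteq> X 1 \<Longrightarrow>
    \<exists>du. (\<forall>u\<in>U. \<forall>v\<in>U. polar Q v (du u) = (if v = u then 1 else 0)) \<and> (\<forall>u\<in>U. Q (du u) = 0) \<and>
         (\<forall>u\<in>U. \<forall>v\<in>U. polar Q (du u) (du v) = 0)"
proof (induction U rule: finite_induct)
  case empty
  then show ?case by simp
next
  case (insert x F)
  note ps = polsimps[OF qf]
  let ?B = "polar Q"
  have xX: "x \<in> X 1" and FX: "F \<subseteq> X 1" using insert.prems by auto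
  have indF: "vec.independent F" and xsp: "x \<notin> vec.span F"
    using insert.prems(1) insert.hyps(2) vec.independent_insert[of x F] by auto
  obtain du where du1: "\<And>u v. u \<in> F \<Longrightarrow> v \<in> F \<Longrightarrow> ?B v (du u) = (if v = u then 1 else 0)"
    and du2: "\<And>u. u \<in> F \<Longrightarrow> Q (du u) = 0"
    and du3: "\<And>u v. u \<in> F \<Longrightarrow> v \<in> F \<Longrightarrow> ?B (du u) (du v) = 0"
    using insert.IH indF FX by blast
  have du1': "?B (du u) v = (if v = u then 1 else 0)" if "u \<in> F" "v \<in> F" for u v
    using du1[OF that] pol_sym[OF qf, of "du u" v] by simp
  have BFF: "?B u v = 0" if "u \<in> insert x F" "v \<in> insert x F" for u v
    using filt_B0[OF filt] that insert.prems(2) by blast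
  have sub: "vec.subspace (X 1)" by (rule filt_subspace[OF filt])
  define w where "w = x - (\<Sum>v\<in>F. ?B x (du v) *s v)"
  have wX: "w \<in> X 1" unfolding w_def
    by (intro vec.subspace_diff[OF sub] xX vec.subspace_sum[OF sub] vec.subspace_scale[OF sub]) (use FX in auto)
  have "w \<noteq> 0"
  proof
    assume "w = 0"
    then have "x = (\<Sum>v\<in>F. ?B x (du v) *s v)" unfolding w_def by simp
    moreover have "(\<Sum>v\<in>F. ?B x (du v) *s v) \<in> vec.span F"
      by (intro vec.span_sum vec.span_scale vec.span_base)
    ultimately show False using xsp by simp
  qed
  then obtain z where gz: "?B w z \<noteq> 0" using rad0[OF qf nd filt wX] by blast
  define z' where "z' = z - (\<Sum>v\<in>F. ?B v z *s du v)"
  have Bvz': "?B v z' = 0" if v: "v \<in> F" for v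
  proof -
    have "?B v z' = ?B v z - (\<Sum>u\<in>F. ?B u z * ?B v (du u))" unfolding z'_def by (simp add: ps)
    also have "(\<Sum>u\<in>F. ?B u z * ?B v (du u)) = (\<Sum>u\<in>F. if v = u then ?B u z else 0)"
      by (rule sum.cong) (use v du1 in auto)
    also have "\<dots> = ?B v z" using v insert.hyps(1) by simp
    finally show ?thesis by simp
  qed
  have Bxz': "?B x z' = ?B w z"
    unfolding z'_def w_def by (simp add: ps mult.commute)
  define y0 where "y0 = inverse (?B w z) *s z'"
  have y0a: "?B v y0 = 0" if "v \<in> F" for v unfolding y0_def using Bvz'[OF that] by (simp add: ps)
  have y0b: "?B x y0 = 1" unfolding y0_def using Bxz' gz by (simp add: ps)
  have Qx: "Q x = 0" using filt_iso[OF filt, of 1 x] xX by simp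
  have Bxx: "?B x x = 0" using BFF by simp
  define y1 where "y1 = y0 - Q y0 *s x"
  have y1a: "?B v y1 = 0" if v: "v \<in> F" for v
    unfolding y1_def using y0a[OF v] BFF[of v x] v by (simp add: ps)
  have y1b: "?B x y1 = 1"
    unfolding y1_def using y0b Bxx by (simp add: ps)
  have y1Q: "Q y1 = 0"
  proof -
    have "Q y1 = Q y0 + Q (Q y0 *s x) - ?B y0 (Q y0 *s x)" unfolding y1_def by (rule qf_diff[OF qf])
    also have "?B y0 (Q y0 *s x) = Q y0" using y0b pol_sym[OF qf, of y0 x] by (simp add: ps)
    finally show ?thesis using Qx by (simp add: qf_scale[OF qf])
  qed
  define sv where "sv = (\<Sum>v\<in>F. ?B (du v) y1 *s v)"
  define y where "y = y1 - sv"
  have svX: "sv \<in> X 1" unfolding sv_def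
    by (intro vec.subspace_sum[OF sub] vec.subspace_scale[OF sub]) (use FX in auto)
  have ya: "?B v y = 0" if v: "v \<in> F" for v
  proof -
    have "?B v y = ?B v y1 - (\<Sum>u\<in>F. ?B (du u) y1 * ?B v u)" unfolding y_def sv_def by (simp add: ps)
    also have "(\<Sum>u\<in>F. ?B (du u) y1 * ?B v u) = 0"
      by (rule sum.neutral) (use v BFF in auto)
    finally show ?thesis using y1a[OF v] by simp
  qed
  have yb: "?B x y = 1"
  proof -
    have "?B x y = ?B x y1 - (\<Sum>u\<in>F. ?B (du u) y1 * ?B x u)" unfolding y_def sv_def by (simp add: ps)
    also have "(\<Sum>u\<in>F. ?B (du u) y1 * ?B x u) = 0"
      by (rule sum.neutral) (use BFF in auto)
    finally show ?thesis using y1b by simp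
  qed
  have yc: "?B (du v) y = 0" if v: "v \<in> F" for v
  proof -
    have "?B (du v) y = ?B (du v) y1 - (\<Sum>u\<in>F. ?B (du u) y1 * ?B (du v) u)" unfolding y_def sv_def by (simp add: ps)
    also have "(\<Sum>u\<in>F. ?B (du u) y1 * ?B (du v) u) = (\<Sum>u\<in>F. if u = v then ?B (du u) y1 else 0)"
      by (rule sum.cong) (use v du1' in auto)
    also have "\<dots> = ?B (du v) y1" using v insert.hyps(1) by simp
    finally show ?thesis by simp
  qed
  have yc': "?B y (du v) = 0" if v: "v \<in> F" for v
    using yc[OF v] pol_sym[OF qf, of y "du v"] by simp
  have yQ: "Q y = 0"
  proof -
    have "Q y = Q y1 + Q sv - ?B y1 sv" unfolding y_def by (rule qf_diff[OF qf])
    moreover have "Q sv = 0" using filt_iso[OF filt, of 1 sv] svX by simp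
    moreover have "?B y1 sv = 0"
    proof -
      have "?B y1 sv = (\<Sum>u\<in>F. ?B (du u) y1 * ?B y1 u)" unfolding sv_def by (simp add: ps)
      also have "\<dots> = 0"
      proof (rule sum.neutral, rule ballI)
        fix u assume u: "u \<in> F"
        have "?B y1 u = ?B u y1" by (rule pol_sym[OF qf])
        then show "?B (du u) y1 * ?B y1 u = 0" using y1a[OF u] by simp
      qed
      finally show ?thesis .
    qed
    ultimately show ?thesis using y1Q by simp
  qed
  have Byy: "?B y y = 0" using pol_self[OF qf, of y] yQ by simp
  define du' where "du' u = (if u = x then y else du u - ?B x (du u) *s y)" for u
  have xnF: "x \<notin> F" by (rule insert.hyps(2))
  have P1: "?B v (du' u) = (if v = u then 1 else 0)" if u: "u \<in> insert x F" and v: "v \<in> insert x F" for u v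
  proof (cases "u = x")
    case True
    then show ?thesis using v ya yb xnF unfolding du'_def by auto
  next
    case False
    then have uF: "u \<in> F" using u by simp
    show ?thesis
    proof (cases "v = x")
      case True
      then show ?thesis using uF xnF yb unfolding du'_def by (auto simp: ps)
    next
      case False
      then have "v \<in> F" using v by simp
      then show ?thesis using uF xnF du1 ya unfolding du'_def by (auto simp: ps)
    qed
  qed
  have P2: "Q (du' u) = 0" if u: "u \<in> insert x F" for u
  proof (cases "u = x")
    case True
    then show ?thesis using yQ unfolding du'_def by simp
  next
    case False
    then have uF: "u \<in> F" using u by simp
    have "Q (du u - ?B x (du u) *s y) = Q (du u) + Q (?B x (du u) *s y) - ?B (du u) (?B x (du u) *s y)"
      by (rule qf_diff[OF qf])
    then show ?thesis using False du2[OF uF] yQ yc[OF uF] unfolding du'_def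
      by (simp add: qf_scale[OF qf] ps)
  qed
  have P3: "?B (du' u) (du' v) = 0" if u: "u \<in> insert x F" and v: "v \<in> insert x F" for u v
  proof (cases "u = x")
    case True
    show ?thesis
    proof (cases "v = x")
      case True
      then show ?thesis using \<open>u = x\<close> Byy unfolding du'_def by simp
    next
      case False
      then have "v \<in> F" using v by simp
      then show ?thesis using \<open>u = x\<close> False Byy yc' unfolding du'_def by (simp add: ps)
    qed
  next
    case False
    then have uF: "u \<in> F" using u by simp
    show ?thesis
    proof (cases "v = x")
      case True
      then show ?thesis using uF False Byy yc unfolding du'_def by (simp add: ps)
    next
      case vx: False
      then have "v \<in> F" using v by simp
      then show ?thesis using uF False vx Byy yc yc' du3 unfolding du'_def by (simp add: ps)
    qed
  qed
  show ?case using P1 P2 P3 by blast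
qed



lemma splitting_exists:
  fixes Q :: "'k::field^'n \<Rightarrow> 'k" and X :: "int \<Rightarrow> ('k^'n) set"
  assumes qf: "quadratic_form Q" and nd: "nondegenerate Q" and filt: "Q_filtration Q X"
  shows "\<exists>(P :: int \<Rightarrow> 'k^'n^'n) A. finite A \<and> sum P A = mat 1 \<and>
     (\<forall>a b. P a ** P b = (if a = b then P a else 0)) \<and>
     (\<forall>a b x y. a + b \<noteq> 0 \<longrightarrow> polar Q (P a *v x) (P b *v y) = 0) \<and>
     (\<forall>a x. a \<noteq> 0 \<longrightarrow> Q (P a *v x) = 0) \<and>
     (\<forall>N a b. (\<forall>b x. x \<in> X b \<longrightarrow> N *v x \<in> X (b + 2)) \<longrightarrow> a \<le> b \<longrightarrow> P a ** N ** P b = 0)"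
proof -
  have "\<exists>a0. \<forall>a\<ge>a0. X a = {0}"
    using filt unfolding Q_filtration_def by (elim conjE) assumption
  then obtain a0' where a0': "\<And>a. a \<ge> a0' \<Longrightarrow> X a = {0}" by blast
  define a0 where "a0 = max a0' 1"
  have a01: "1 \<le> a0" unfolding a0_def by simp
  have top: "\<And>a. a \<ge> a0 \<Longrightarrow> X a = {0}" using a0' unfolding a0_def by simp
  have claim: "\<exists>U. vec.independent U \<and> U \<subseteq> X (a0 - int j) \<and> (\<forall>a \<ge> a0 - int j. X a \<subseteq> vec.span (U \<inter> X a))"
    for j :: nat
  proof (induction j)
    case 0
    have "X a \<subseteq> vec.span ({} \<inter> X a)" if "a \<ge> a0 - int 0" for a using top[of a] that by simp
    then show ?case by (intro exI[of _ "{}"]) (simp add: vec.independent_empty)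
  next
    case (Suc j)
    then obtain U where U: "vec.independent U" "U \<subseteq> X (a0 - int j)"
      "\<And>a. a \<ge> a0 - int j \<Longrightarrow> X a \<subseteq> vec.span (U \<inter> X a)" by blast
    let ?m = "a0 - int (Suc j)"
    have "X (a0 - int j) \<subseteq> X ?m" by (rule filt_mono[OF filt]) simp
    then have "U \<subseteq> X ?m" using U(2) by blast
    then obtain U' where U': "U \<subseteq> U'" "U' \<subseteq> X ?m" "vec.independent U'" "X ?m \<subseteq> vec.span U'"
      using vec.maximal_independent_subset_extend[of U "X ?m"] U(1) by blast
    have "X a \<subseteq> vec.span (U' \<inter> X a)" if a: "a \<ge> ?m" for a
    proof (cases "a = ?m")
      case True
      then have "U' \<inter> X a = U'" using U'(2) by blast
      then show ?thesis using U'(4) True by simp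
    next
      case False
      then have "a \<ge> a0 - int j" using a by simp
      then have "X a \<subseteq> vec.span (U \<inter> X a)" by (rule U(3))
      also have "\<dots> \<subseteq> vec.span (U' \<inter> X a)" by (rule vec.span_mono) (use U'(1) in blast)
      finally show ?thesis .
    qed
    then show ?case using U' by blast
  qed
  obtain U where U: "vec.independent U" "U \<subseteq> X 1" "\<And>a. a \<ge> 1 \<Longrightarrow> X a \<subseteq> vec.span (U \<inter> X a)"
  proof -
    have e: "a0 - int (nat (a0 - 1)) = 1" using a01 by simp
    show ?thesis using claim[of "nat (a0 - 1)"] that unfolding e by blast
  qed
  have finU: "finite U" using U(1) vec.finiteI_independent by blast
  have U0: "0 \<notin> U" using U(1) vec.dependent_zero by blast
  have dex: "\<exists>a. 1 \<le> a \<and> u \<in> X a \<and> u \<notin> X (a + 1) \<and> a < a0" if u: "u \<in> U" for u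
  proof -
    let ?T = "{a \<in> {1..a0}. u \<in> X a}"
    have fin: "finite ?T" by (rule finite_subset[of _ "{1..a0}"]) auto
    have ne: "1 \<in> ?T" using u U(2) a01 by auto
    define a where "a = Max ?T"
    have aT: "a \<in> ?T" unfolding a_def using fin ne Max_in by blast
    have "a < a0"
    proof (rule ccontr)
      assume "\<not> a < a0"
      then have "X a = {0}" using top by simp
      then show False using aT U0 u by auto
    qed
    moreover have "u \<notin> X (a + 1)"
    proof
      assume "u \<in> X (a + 1)"
      then have "a + 1 \<in> ?T" using aT \<open>a < a0\<close> by auto
      then have "a + 1 \<le> a" unfolding a_def using fin Max_ge by blast
      then show False by simp
    qed
    ultimately show ?thesis using aT by auto
  qed
  define d where "d u = (SOME a. 1 \<le> a \<and> u \<in> X a \<and> u \<notin> X (a + 1) \<and> a < a0)" for u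
  have dP: "1 \<le> d u \<and> u \<in> X (d u) \<and> u \<notin> X (d u + 1) \<and> d u < a0" if "u \<in> U" for u
    unfolding d_def using someI_ex[OF dex[OF that]] .
  have dmem: "u \<in> X c \<longleftrightarrow> c \<le> d u" if u: "u \<in> U" for u c
  proof
    assume "u \<in> X c"
    show "c \<le> d u"
    proof (rule ccontr)
      assume "\<not> c \<le> d u"
      then have "X c \<subseteq> X (d u + 1)" by (intro filt_mono[OF filt]) simp
      then show False using \<open>u \<in> X c\<close> dP[OF u] by blast
    qed
  next
    assume "c \<le> d u"
    then have "X (d u) \<subseteq> X c" by (rule filt_mono[OF filt])
    then show "u \<in> X c" using dP[OF u] by blast
  qed
  obtain du where du1: "\<forall>u\<in>U. \<forall>v\<in>U. polar Q v (du u) = (if v = u then 1 else 0)"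
    and du2: "\<forall>u\<in>U. Q (du u) = 0" and du3: "\<forall>u\<in>U. \<forall>v\<in>U. polar Q (du u) (du v) = 0"
    using dual_exists[OF qf nd filt finU U(1) U(2)] by blast
  interpret sd: splitdata Q X U du d a0
  proof
    show "quadratic_form Q" by (rule qf)
    show "Q_filtration Q X" by (rule filt)
    show "finite U" by (rule finU)
    show "U \<subseteq> X 1" by (rule U(2))
    show "\<And>a. 1 \<le> a \<Longrightarrow> X a \<subseteq> vec.span (U \<inter> X a)" by (rule U(3))
    show "\<And>u v. u \<in> U \<Longrightarrow> v \<in> U \<Longrightarrow> polar Q v (du u) = (if v = u then 1 else 0)" using du1 by blast
    show "\<And>u. u \<in> U \<Longrightarrow> Q (du u) = 0" using du2 by blast
    show "\<And>u v. u \<in> U \<Longrightarrow> v \<in> U \<Longrightarrow> polar Q (du u) (du v) = 0" using du3 by blast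
    show "\<And>u c. u \<in> U \<Longrightarrow> (u \<in> X c) = (c \<le> d u)" by (rule dmem)
    show "\<And>u. u \<in> U \<Longrightarrow> 1 \<le> d u" using dP by blast
    show "\<And>u. u \<in> U \<Longrightarrow> d u < a0" using dP by blast
    show "1 \<le> a0" by (rule a01)
  qed
  have p1: "finite sd.AA" and p2: "sum sd.PM sd.AA = mat 1"
    and p3: "\<forall>a b. sd.PM a ** sd.PM b = (if a = b then sd.PM a else 0)"
    and p4: "\<forall>a b x y. a + b \<noteq> 0 \<longrightarrow> polar Q (sd.PM a *v x) (sd.PM b *v y) = 0"
    and p5: "\<forall>a x. a \<noteq> 0 \<longrightarrow> Q (sd.PM a *v x) = 0"
    and p6: "\<forall>N a b. (\<forall>b x. x \<in> X b \<longrightarrow> N *v x \<in> X (b + 2)) \<longrightarrow> a \<le> b \<longrightarrow> sd.PM a ** N ** sd.PM b = 0"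
    using sd.PM_props by auto
  show ?thesis
    apply (rule exI[of _ sd.PM], rule exI[of _ sd.AA])
    using p1 p2 p3 p4 p5 p6 by (intro conjI)
qed



lemma mv_expand: "(M::'a::comm_ring_1^'n^'m) *v x = (\<Sum>i\<in>UNIV. x $ i *s (M *v axis i 1))"
proof -
  have "M *v x = M *v (\<Sum>i\<in>UNIV. x $ i *s axis i 1)" by (simp only: basis_expansion)
  then show ?thesis by (simp add: mv_sum mv_scale)
qed

lemma bil_zero:
  fixes q :: "'K::field^'n \<Rightarrow> 'K"
  assumes qf: "quadratic_form q" and h: "\<And>i j. polar q (M *v axis i 1) (M' *v axis j 1) = 0"
  shows "polar q (M *v x) (M' *v y) = 0"
  unfolding mv_expand[of M x] mv_expand[of M' y]
  by (simp add: polsimps[OF qf] h)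

lemma quad_eq:
  fixes q :: "'K::field^'n \<Rightarrow> 'K"
  assumes qf: "quadratic_form q"
    and h1: "\<And>i. q (M *v axis i 1) = q (M' *v axis i 1)"
    and h2: "\<And>i j. polar q (M *v axis i 1) (M *v axis j 1) = polar q (M' *v axis i 1) (M' *v axis j 1)"
  shows "q (M *v x) = q (M' *v x)"
  unfolding mv_expand[of M x] mv_expand[of M' x]
  by (rule qf_sum_eq[OF qf]) (simp_all add: qf_scale[OF qf] polsimps[OF qf] h1 h2)

locale fhom =
  fixes \<phi> :: "'k::field \<Rightarrow> 'K::field"
  assumes h1: "\<phi> 1 = 1" and hadd: "\<And>a b. \<phi> (a + b) = \<phi> a + \<phi> b"
    and hmult: "\<And>a b. \<phi> (a * b) = \<phi> a * \<phi> b"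
begin

lemma h0: "\<phi> 0 = 0"
proof -
  have "\<phi> 0 + \<phi> 0 = \<phi> 0 + 0" using hadd[of 0 0] by simp
  then show ?thesis by (simp only: add_left_cancel)
qed

lemma hneg: "\<phi> (- a) = - \<phi> a"
  using hadd[of a "- a"] h0 by (simp add: eq_neg_iff_add_eq_0 add.commute)

lemma hdiff: "\<phi> (a - b) = \<phi> a - \<phi> b"
  using hadd[of a "- b"] hneg[of b] by simp

lemma hsum: "\<phi> (\<Sum>i\<in>F. f i) = (\<Sum>i\<in>F. \<phi> (f i))"
  by (induction F rule: infinite_finite_induct) (simp_all add: h0 hadd)

lemma hpow: "\<phi> (a ^ n) = \<phi> a ^ n"
  by (induction n) (simp_all add: h1 hmult)

definition mapv :: "'k^'n \<Rightarrow> 'K^'n" where "mapv v = (\<chi> i. \<phi> (v $ i))"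

lemma mapv_nth[simp]: "mapv v $ i = \<phi> (v $ i)" unfolding mapv_def by simp

lemma mapv_axis: "mapv (axis i 1) = axis i 1"
  by (simp add: vec_eq_iff axis_def h0 h1)

lemma mapv_add: "mapv (x + y) = mapv x + mapv y"
  by (simp add: vec_eq_iff hadd)

lemma mapv_scale: "mapv (c *s x) = \<phi> c *s mapv x"
  by (simp add: vec_eq_iff hmult)

lemma map_mv: "map_matrix \<phi> M *v mapv v = mapv (M *v v)"
  by (simp add: vec_eq_iff matrix_vector_mult_def hsum hmult)

lemma map_mm: "map_matrix \<phi> (A ** B) = map_matrix \<phi> A ** map_matrix \<phi> B"
  by (simp add: vec_eq_iff matrix_matrix_mult_def hsum hmult)

lemma map_add: "map_matrix \<phi> (A + B) = map_matrix \<phi> A + map_matrix \<phi> B"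
  by (simp add: vec_eq_iff hadd)

lemma map_zero: "map_matrix \<phi> 0 = 0"
  by (simp add: vec_eq_iff h0)

lemma map_one: "map_matrix \<phi> (mat 1) = mat 1"
  by (simp add: vec_eq_iff mat_def h0 h1)

lemma map_sum: "map_matrix \<phi> (\<Sum>a\<in>F. M a) = (\<Sum>a\<in>F. map_matrix \<phi> (M a))"
  by (simp add: vec_eq_iff hsum)

lemma map_mpow: "mpow (map_matrix \<phi> N) m = map_matrix \<phi> (mpow N m)"
  by (induction m) (simp_all add: map_one map_mm)

lemma map_axis_mv: "map_matrix \<phi> M *v axis i 1 = mapv (M *v axis i 1)"
  by (metis map_mv mapv_axis)

context
  fixes Q :: "'k^'n \<Rightarrow> 'k" and Qt :: "'K^'n \<Rightarrow> 'K"
  assumes qf: "quadratic_form Q" and ext: "extends_qf \<phi> Q Qt"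
begin

lemma qft: "quadratic_form Qt" using ext unfolding extends_qf_def by simp

lemma Bt_axis: "polar Qt (axis i 1) (axis j 1) = \<phi> (polar Q (axis i 1) (axis j 1))"
  using ext unfolding extends_qf_def by simp

lemma Qt_axis: "Qt (axis i 1) = \<phi> (Q (axis i 1))"
  using ext unfolding extends_qf_def by simp

lemma Bt_map_axis: "polar Qt (mapv v) (axis j 1) = \<phi> (polar Q v (axis j 1))"
proof -
  have "polar Qt (mapv v) (axis j 1) = polar Qt (\<Sum>i\<in>UNIV. \<phi> (v $ i) *s axis i 1) (axis j 1)"
    using basis_expansion[of "mapv v"] by simp
  also have "\<dots> = (\<Sum>i\<in>UNIV. \<phi> (v $ i) * \<phi> (polar Q (axis i 1) (axis j 1)))"
    by (simp add: polsimps[OF qft] Bt_axis)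
  also have "\<dots> = \<phi> (\<Sum>i\<in>UNIV. v $ i * polar Q (axis i 1) (axis j 1))"
    by (simp add: hsum hmult)
  also have "(\<Sum>i\<in>UNIV. v $ i * polar Q (axis i 1) (axis j 1)) = polar Q (\<Sum>i\<in>UNIV. v $ i *s axis i 1) (axis j 1)"
    by (simp add: polsimps[OF qf])
  finally show ?thesis by (simp only: basis_expansion)
qed

lemma Bt_map: "polar Qt (mapv v) (mapv w) = \<phi> (polar Q v w)"
proof -
  have "polar Qt (mapv v) (mapv w) = polar Qt (mapv v) (\<Sum>j\<in>UNIV. \<phi> (w $ j) *s axis j 1)"
    using basis_expansion[of "mapv w"] by simp
  also have "\<dots> = (\<Sum>j\<in>UNIV. \<phi> (w $ j) * \<phi> (polar Q v (axis j 1)))"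
    by (simp add: polsimps[OF qft] Bt_map_axis)
  also have "\<dots> = \<phi> (\<Sum>j\<in>UNIV. w $ j * polar Q v (axis j 1))"
    by (simp add: hsum hmult)
  also have "(\<Sum>j\<in>UNIV. w $ j * polar Q v (axis j 1)) = polar Q v (\<Sum>j\<in>UNIV. w $ j *s axis j 1)"
    by (simp add: polsimps[OF qf])
  finally show ?thesis by (simp only: basis_expansion)
qed

lemma Qt_map: "Qt (mapv v) = \<phi> (Q v)"
proof -
  have "v \<in> vec.span cart_basis" by simp
  then show ?thesis
  proof (induction rule: vec.span_induct_alt)
    case base
    have "mapv (0::'k^'n) = 0" by (simp add: vec_eq_iff h0)
    then show ?case using qf_0[OF qf] qf_0[OF qft] h0 by simp
  next
    case (step c e y)
    then obtain i where e: "e = axis i 1" unfolding cart_basis_def by blast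
    have "Qt (mapv (c *s e + y)) = Qt (\<phi> c *s axis i 1 + mapv y)"
      by (simp add: mapv_add mapv_scale e mapv_axis)
    also have "\<dots> = \<phi> c ^ 2 * Qt (axis i 1) + Qt (mapv y) + \<phi> c * polar Qt (mapv e) (mapv y)"
      by (simp add: qf_add[OF qft] qf_scale[OF qft] polsimps[OF qft] e mapv_axis)
    also have "\<dots> = \<phi> (c ^ 2 * Q e + Q y + c * polar Q e y)"
      using step.IH by (simp add: Bt_map e Qt_axis hadd hmult hpow)
    also have "c ^ 2 * Q e + Q y + c * polar Q e y = Q (c *s e + y)"
      by (simp add: qf_add[OF qf] qf_scale[OF qf] polsimps[OF qf])
    finally show ?case .
  qed
qed

end

end



lemma iso_polar:
  assumes "\<And>x. Q (M *v x) = Q x"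
  shows "polar Q (M *v x) (M *v y) = polar Q x y"
proof -
  have "Q (M *v x + M *v y) = Q (x + y)" using assms[of "x + y"] by (simp add: matrix_vector_right_distrib)
  then show ?thesis unfolding polar_def using assms[of x] assms[of y] by simp
qed

theorem mainTheorem4:
  fixes Q :: "'k::field^'n \<Rightarrow> 'k" and X :: "int \<Rightarrow> ('k^'n) set"
  assumes "finite (UNIV :: 'k set) \<or> alg_closed TYPE('k)"
    and "quadratic_form Q" and "nondegenerate Q" and "Q_filtration Q X"
  shows "\<forall>N \<in> E2 Q X.
           (alg_closed TYPE('k) \<longrightarrow> mat 1 + N \<in> SO_Q_closed Q) \<and>
           (finite (UNIV :: 'k set) \<longrightarrow>
              (\<forall>\<phi> :: 'k \<Rightarrow> 'K::field. is_alg_closure \<phi> \<longrightarrow> mat 1 + N \<in> SO_Q_finite \<phi> Q))"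
proof
  fix N assume N: "N \<in> E2 Q X"
  have qf: "quadratic_form Q" and nd: "nondegenerate Q" and filt: "Q_filtration Q X" using assms by auto
  have NM: "N \<in> tilde_M Q" using N unfolding E2_def by simp
  have "nilpotent_mat N" using NM unfolding tilde_M_def by simp
  then obtain m where nil: "mpow N m = 0" unfolding nilpotent_mat_def by blast
  have hN0: "\<forall>a. \<forall>x\<in>X a. N *v x \<in> X (a + 2)" using N unfolding E2_def by simp
  have hN: "\<forall>b x. x \<in> X b \<longrightarrow> N *v x \<in> X (b + 2)" using hN0 by simp
  have isoN: "Q ((mat 1 + N) *v x) = Q x" for x
  proof -
    have "\<forall>x. Q (N *v x) = - polar Q x (N *v x)" using NM unfolding tilde_M_def by simp
    then have "Q (N *v x) = - polar Q x (N *v x)" by simp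
    then show ?thesis by (simp add: matrix_vector_mult_add_rdistrib qf_add[OF qf])
  qed
  have "\<exists>(P :: int \<Rightarrow> 'k^'n^'n) A. finite A \<and> sum P A = mat 1 \<and>
     (\<forall>a b. P a ** P b = (if a = b then P a else 0)) \<and>
     (\<forall>a b x y. a + b \<noteq> 0 \<longrightarrow> polar Q (P a *v x) (P b *v y) = 0) \<and>
     (\<forall>a x. a \<noteq> 0 \<longrightarrow> Q (P a *v x) = 0) \<and>
     (\<forall>N a b. (\<forall>b x. x \<in> X b \<longrightarrow> N *v x \<in> X (b + 2)) \<longrightarrow> a \<le> b \<longrightarrow> P a ** N ** P b = 0)"
    by (rule splitting_exists[OF qf nd filt])
  then obtain P :: "int \<Rightarrow> 'k^'n^'n" and A :: "int set" where H: "finite A \<and> sum P A = mat (1::'k) \<and>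
     (\<forall>a b. P a ** P b = (if a = b then P a else 0)) \<and>
     (\<forall>a b x y. a + b \<noteq> 0 \<longrightarrow> polar Q (P a *v x) (P b *v y) = 0) \<and>
     (\<forall>a x. a \<noteq> 0 \<longrightarrow> Q (P a *v x) = 0) \<and>
     (\<forall>N a b. (\<forall>b x. x \<in> X b \<longrightarrow> N *v x \<in> X (b + 2)) \<longrightarrow> a \<le> b \<longrightarrow> P a ** N ** P b = 0)"
    by blast
  have finA: "finite A" using H by (elim conjE)
  have sumP: "sum P A = mat (1::'k)" using H by (elim conjE)
  have PP: "\<forall>a b. P a ** P b = (if a = b then P a else 0)" using H by (elim conjE)
  have orth: "\<forall>a b x y. a + b \<noteq> 0 \<longrightarrow> polar Q (P a *v x) (P b *v y) = 0" using H by (elim conjE)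
  have iso: "\<forall>a x. a \<noteq> 0 \<longrightarrow> Q (P a *v x) = 0" using H by (elim conjE)
  have sh: "\<forall>N a b. (\<forall>b x. x \<in> X b \<longrightarrow> N *v x \<in> X (b + 2)) \<longrightarrow> a \<le> b \<longrightarrow> P a ** N ** P b = 0"
    using H by (elim conjE)
  have shN: "P a ** N ** P b = 0" if "a \<le> b" for a b using sh hN that by simp
  have PPa: "\<And>a b. a \<in> A \<Longrightarrow> b \<in> A \<Longrightarrow> P a ** P b = (if a = b then P a else 0)" using PP by simp
  have ortha: "\<And>a b x y. a \<in> A \<Longrightarrow> b \<in> A \<Longrightarrow> a + b \<noteq> 0 \<Longrightarrow> polar Q (P a *v x) (P b *v y) = 0"
    using orth by simp
  have isoa: "\<And>a x. a \<in> A \<Longrightarrow> a \<noteq> 0 \<Longrightarrow> Q (P a *v x) = 0" using iso by simp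
  have sha: "\<And>a b. a \<in> A \<Longrightarrow> b \<in> A \<Longrightarrow> a \<le> b \<Longrightarrow> P a ** N ** P b = 0" using shN by simp
  show "(alg_closed TYPE('k) \<longrightarrow> mat 1 + N \<in> SO_Q_closed Q) \<and>
           (finite (UNIV :: 'k set) \<longrightarrow>
              (\<forall>\<phi> :: 'k \<Rightarrow> 'K::field. is_alg_closure \<phi> \<longrightarrow> mat 1 + N \<in> SO_Q_finite \<phi> Q))"
  proof (intro conjI impI allI)
    assume ac: "alg_closed TYPE('k)"
    show "mat 1 + N \<in> SO_Q_closed Q"
      unfolding SO_Q_closed_def
      by (rule curve_lemma[OF alg_closed_infinite[OF ac] qf finA sumP PPa ortha isoa sha isoN nil])
  next
    fix \<phi> :: "'k \<Rightarrow> 'K::field"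
    assume fin: "finite (UNIV :: 'k set)" and cl: "is_alg_closure \<phi>"
    have inO: "mat 1 + N \<in> O_Q Q"
      unfolding O_Q_def using nilpotent_invertible[OF nil] isoN by simp
    have cl1: "\<phi> 1 = 1" "\<And>a b. \<phi> (a + b) = \<phi> a + \<phi> b" "\<And>a b. \<phi> (a * b) = \<phi> a * \<phi> b"
      using cl unfolding is_alg_closure_def by simp_all
    interpret fhom \<phi> by (unfold_locales; rule cl1)
    have "alg_closed TYPE('K)" using cl unfolding is_alg_closure_def by simp
    then have infK: "infinite (UNIV :: 'K set)" by (rule alg_closed_infinite)
    have "map_matrix \<phi> (mat 1 + N) \<in> SO_Q_closed Qt" if ext: "extends_qf \<phi> Q Qt" for Qt
    proof -
      note qft = qft[OF qf ext]
      define P' where "P' a = map_matrix \<phi> (P a)" for a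
      define N' where "N' = map_matrix \<phi> N"
      have e: "map_matrix \<phi> (mat 1 + N) = mat 1 + N'" unfolding N'_def by (simp add: map_add map_one)
      have sumP': "sum P' A = mat 1" unfolding P'_def by (simp add: map_sum[symmetric] sumP map_one)
      have PP': "P' a ** P' b = (if a = b then P' a else 0)" for a b
        unfolding P'_def by (simp add: map_mm[symmetric] PP map_zero)
      have orth': "polar Qt (P' a *v x) (P' b *v y) = 0" if ab: "a + b \<noteq> 0" for a b x y
      proof (rule bil_zero[OF qft])
        fix i j
        show "polar Qt (P' a *v axis i 1) (P' b *v axis j 1) = 0"
          unfolding P'_def map_axis_mv Bt_map[OF qf ext] using orth ab h0 by simp
      qed
      have iso': "Qt (P' a *v x) = 0" if a: "a \<noteq> 0" for a x
      proof -
        have "Qt (P' a *v x) = Qt (0 *v x)"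
        proof (rule quad_eq[OF qft])
          fix i j
          show "Qt (P' a *v axis i 1) = Qt (0 *v axis i 1)"
            unfolding P'_def map_axis_mv Qt_map[OF qf ext] using iso a h0 qf_0[OF qft] by simp
          show "polar Qt (P' a *v axis i 1) (P' a *v axis j 1) = polar Qt (0 *v axis i 1) (0 *v axis j 1)"
            unfolding P'_def map_axis_mv Bt_map[OF qf ext] using orth a h0 pol_0L[OF qft] by simp
        qed
        then show ?thesis using qf_0[OF qft] by simp
      qed
      have sh': "P' a ** N' ** P' b = 0" if "a \<le> b" for a b
        unfolding P'_def N'_def by (simp add: map_mm[symmetric] shN[OF that] map_zero)
      have isoN': "Qt ((mat 1 + N') *v x) = Qt x" for x
      proof -
        have "Qt ((mat 1 + N') *v x) = Qt (mat 1 *v x)"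
        proof (rule quad_eq[OF qft])
          fix i j
          show "Qt ((mat 1 + N') *v axis i 1) = Qt (mat 1 *v axis i 1)"
            using Qt_map[OF qf ext, of "(mat 1 + N) *v axis i 1"] Qt_map[OF qf ext, of "axis i 1"]
              isoN[of "axis i 1"] map_axis_mv[of "mat 1 + N" i] mapv_axis[of i]
            unfolding e[symmetric] by simp
          show "polar Qt ((mat 1 + N') *v axis i 1) ((mat 1 + N') *v axis j 1) =
                polar Qt (mat 1 *v axis i 1) (mat 1 *v axis j 1)"
            using Bt_map[OF qf ext, of "(mat 1 + N) *v axis i 1" "(mat 1 + N) *v axis j 1"]
              Bt_map[OF qf ext, of "axis i 1" "axis j 1"]
              iso_polar[of Q "mat 1 + N", OF isoN, of "axis i 1" "axis j 1"]
              map_axis_mv[of "mat 1 + N" i] map_axis_mv[of "mat 1 + N" j] mapv_axis[of i] mapv_axis[of j]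
            unfolding e[symmetric] by simp
        qed
        then show ?thesis by simp
      qed
      have nil': "mpow N' m = 0" unfolding N'_def by (simp add: map_mpow nil map_zero)
      show ?thesis unfolding e SO_Q_closed_def
        by (rule curve_lemma[OF infK qft finA sumP']) (rule PP', rule orth', assumption, rule iso', assumption, rule sh', assumption, rule isoN', rule nil')
    qed
    then show "mat 1 + N \<in> SO_Q_finite \<phi> Q"
      unfolding SO_Q_finite_def using inO by blast
  qed
qed


end
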